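(* Let $p$ be a prime and $b$ an integer with $1<b<p$. Write $p=bq+r$ with $0\le r<b$ and $p=b^{-1}s+t$ with $0\le t<b^{-1}$ (division algorithm). Then $$\{x_1^{p-kb}x_2^k\mid 0\le k\le q\}\cap\{x_1^mx_2^{p-mb^{-1}}\mid 0\le m\le s-1\}=\emptyset.$$
   Context: $x_1,x_2$ are variables of the polynomial ring $\mathbb{C}[x_1,x_2]$. $b^{-1}$ is the unique integer $0<b^{-1}<p$ with $bb^{-1}\equiv1\pmod p$. *)

theory Defs
  imports "HOL-Number_Theory.Number_Theory"
begin

definition modinv :: "nat \<Rightarrow> nat \<Rightarrow> nat" where
  "modinv p b = (THE c. 0 < c \<and> c < p \<and> [b * c = 1] (mod p))"

text \<open>A monomial x1^a * x2^c in C[x1,x2] is identified with its exponent pair (a, c);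
  two monomials are equal iff their exponent pairs are equal.\<close>
type_synonym monomial2 = "nat \<times> nat"

definition mono2 :: "nat \<Rightarrow> nat \<Rightarrow> monomial2" where
  "mono2 a c = (a, c)"

end

theory Submission
  imports Defs
begin

lemma modinv_props:
  fixes p b :: nat
  assumes "prime p" and "1 < b" and "b < p"
  shows "0 < modinv p b \<and> modinv p b < p \<and> [b * modinv p b = 1] (mod p)"
proof -
  have cop: "coprime b p"
  proof -
    have "\<not> p dvd b" using assms(2,3) by (auto dest: dvd_imp_le)
    then show ?thesis using assms(1) prime_imp_coprime[of p b] by (simp add: coprime_commute)
  qed
  obtain c0 where c0: "[b * c0 = 1] (mod p)" using cong_solve_coprime_nat[OF cop] by auto
  define c where "c = c0 mod p"
  have p1: "p > 1" using assms prime_gt_1_nat by blast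
  have cc: "[b * c = 1] (mod p)" unfolding c_def using c0
    by (simp add: cong_def mod_mult_right_eq)
  have "c < p" unfolding c_def using p1 by simp
  moreover have "c > 0"
  proof (rule ccontr)
    assume "\<not> c > 0" then have "c = 0" by simp
    with cc have "[0 = 1] (mod p)" by simp
    then show False using p1 by (simp add: cong_def)
  qed
  ultimately have ex: "0 < c \<and> c < p \<and> [b * c = 1] (mod p)" using cc by blast
  have uniq: "d = c" if "0 < d \<and> d < p \<and> [b * d = 1] (mod p)" for d
  proof -
    have "[b * d = b * c] (mod p)" using cong_trans[OF conjunct2[OF conjunct2[OF that]] cong_sym[OF cc]] .
    then have "[d = c] (mod p)" using cop
      by (metis cong_mult_lcancel_nat)
    then show ?thesis using that \<open>c < p\<close> by (simp add: cong_def)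
  qed
  have "modinv p b = c" unfolding modinv_def
    by (rule the_equality) (use ex uniq in blast)+
  then show ?thesis using ex by simp
qed

theorem lemma3p10:
  fixes p b :: nat
  assumes "prime p" and "1 < b" and "b < p"
  defines "q \<equiv> p div b"
      and "s \<equiv> p div modinv p b"
  shows "{mono2 (p - k * b) k | k. k \<le> q} \<inter>
         {mono2 m (p - m * modinv p b) | m. m \<le> s - 1} = {}"
proof (rule ccontr)
  define c where "c = modinv p b"
  have cp: "0 < c" "c < p" "[b * c = 1] (mod p)" using modinv_props[OF assms(1-3)] c_def by auto
  have p1: "p > 1" using assms prime_gt_1_nat by blast
  assume "\<not> ?thesis"
  then obtain x where "x \<in> {mono2 (p - k * b) k | k. k \<le> q}"
     "x \<in> {mono2 m (p - m * modinv p b) | m. m \<le> s - 1}" by blast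
  then obtain k m where "k \<le> q" "m \<le> s - 1" "x = mono2 (p - k * b) k" "x = mono2 m (p - m * c)"
    unfolding c_def by blast
  then have km: "k \<le> q" "m \<le> s - 1" "p - k * b = m" "k = p - m * c"
    unfolding mono2_def by auto
  have kb: "k * b \<le> p" using km(1) unfolding q_def
    by (metis div_times_less_eq_dividend le_trans mult_le_mono1)
  have s1: "s \<ge> 1" unfolding s_def c_def[symmetric] using cp div_greater_zero_iff[of p c] by linarith
  have "s * c \<le> p" unfolding s_def c_def[symmetric] by (simp add: div_times_less_eq_dividend)
  moreover have "m * c < s * c" using km(2) s1 cp(1) by simp
  ultimately have mc: "m * c < p" by linarith
  have "m + k * b = p" using km(3) kb by linarith
  then have e1: "int m + int k * int b = int p" by (metis of_nat_add of_nat_mult)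
  have n2: "k + m * c = p" using km(4) mc by linarith
  then have e2: "int k + int m * int c = int p" by (metis of_nat_add of_nat_mult)
  have bc: "b * c mod p = 1" using cp(3) p1 by (simp add: cong_def)
  have "b * c \<noteq> 1" using assms(2) cp(1) by simp
  have dm: "b * c = p * (b * c div p) + 1" using bc div_mult_mod_eq[of "b*c" p] by (simp add: mult.commute)
  then have "b * c div p \<noteq> 0" using \<open>b * c \<noteq> 1\<close> by (metis add_0 mult_0_right)
  then have "p * (b * c div p) \<ge> p" by simp
  then have "b * c \<ge> p + 1" using dm by linarith
  then have bcp: "int b * int c - 1 \<ge> int p"
  proof -
    have "int (p + 1) \<le> int (b * c)" using \<open>b * c \<ge> p + 1\<close> by (simp only: of_nat_le_iff)
    then show ?thesis by simp
  qed
  have key: "int k * (int b * int c - 1) = int p * (int c - 1)"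
  proof -
    have "int m = int p - int k * int b" using e1 by simp
    then have "int k = int p - (int p - int k * int b) * int c" using e2 by simp
    then show ?thesis by (simp add: algebra_simps)
  qed
  have i1: "int k * int p \<le> int k * (int b * int c - 1)" using bcp by (simp add: mult_left_mono)
  have i2: "int p * (int c - 1) = int c * int p - int p" by (simp add: algebra_simps)
  have pp: "int p > 0" using p1 by simp
  have "int k * int p < int c * int p" using i1 i2 key pp by linarith
  then have "int k < int c" using pp mult_less_cancel_right_pos by blast
  then have "k < c" by simp
  have "p = m * c + k" using n2 by simp 
  then have "p div c = m" using \<open>k < c\<close> by simp
  then have "s = m" unfolding s_def c_def by simp
  then show False using km(2) s1 by linarith
qed

end
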